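(* Let $P,L\in K\langle\partial_t\rangle$ be monic, with $P\in k(t)[\mathbf x,1/r]\langle\partial_t\rangle$ for some nonzero $r\in k[\mathbf x,t]$ and $L\in k(t)\langle\partial_t\rangle$. Let $\mathbf c\in k^n$ with $r(\mathbf c,t)\neq 0$. (1) If ${\rm gcrd}(P_{\mathbf x=\mathbf c},L)=1$, then ${\rm gcrd}(P,L)=1$. (2) If ${\rm gcrd}(P,L)=1$, then there exists $\mathbf a\in k^n$ with $r(\mathbf a,t)\neq 0$ and ${\rm gcrd}(P_{\mathbf x=\mathbf a},L)=1$.
   Context: $k$ is an algebraically closed field of characteristic zero, $\mathbf x=(x_1,\dots,x_n)$, $K=k(t,x_1,\dots,x_n)$, and $K\langle\partial_t\rangle$ is the ring of linear differential operators in $\partial_t=\partial/\partial t$ with coefficients in $K$; $k(t)[\mathbf x,1/r]\langle\partial_t\rangle$ denotes those operators whose coefficients lie in the subring $k(t)[\mathbf x,1/r]$ of $K$. For such an operator $P$ and $\mathbf c\in k^n$ with $r(\mathbf c,t)\neq0$, $P_{\mathbf x=\mathbf c}\in k(t)\langle\partial_t\rangle$ denotes the operator obtained by substituting $x_i=c_i$ in all coefficients. ${\rm gcrd}(P,L)$ denotes the monic greatest common right divisor of $P$ and $L$ in $K\langle\partial_t\rangle$. *)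

theory Defs
  imports "HOL-Computational_Algebra.Polynomial" "HOL-Computational_Algebra.Fraction_Field"
          "HOL-Library.Poly_Mapping" "HOL-Library.Option_ord"
begin

text \<open>Multivariate polynomials k[t, x_1..x_n]: monomials are finitely supported exponent
  maps on the variables 'n option, where None is the variable t and Some i is x_i.
  The number n of x-variables is CARD('n).\<close>
type_synonym ('k,'n) mpoly = "('n option \<Rightarrow>\<^sub>0 nat) \<Rightarrow>\<^sub>0 'k"

type_synonym ('k,'n) rfun = "('k,'n) mpoly fract"

text \<open>Differential operators in K<d_t>: the polynomial A represents sum_i (coeff A i) d_t^i.\<close>
type_synonym ('k,'n) dop = "('k,'n) rfun poly"

definition mpoly_deriv_t :: "('k::comm_ring_1,'n) mpoly \<Rightarrow> ('k,'n) mpoly" where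
  "mpoly_deriv_t p = (\<Sum>m\<in>Poly_Mapping.keys p.
      Poly_Mapping.single (m - Poly_Mapping.single None 1)
        (Poly_Mapping.lookup p m * of_nat (Poly_Mapping.lookup m None)))"

definition rfun_deriv :: "('k::idom,'n::linorder) rfun \<Rightarrow> ('k,'n) rfun" where
  "rfun_deriv f = (SOME q. \<exists>a b. b \<noteq> 0 \<and> f = Fract a b \<and>
      q = Fract (mpoly_deriv_t a * b - a * mpoly_deriv_t b) (b * b))"

text \<open>Multiplication in the Ore ring K<d_t>, for a derivation D on the coefficients:
  d_t * B = (shift of B) + (D applied to coefficients of B).\<close>
definition d_left :: "('a::comm_ring_1 \<Rightarrow> 'a) \<Rightarrow> 'a poly \<Rightarrow> 'a poly" where
  "d_left D B = pCons 0 B + map_poly D B"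

definition dop_mult :: "('a::comm_ring_1 \<Rightarrow> 'a) \<Rightarrow> 'a poly \<Rightarrow> 'a poly \<Rightarrow> 'a poly" where
  "dop_mult D A B = (\<Sum>i\<le>degree A. smult (coeff A i) ((d_left D ^^ i) B))"

definition right_dvd :: "('a::comm_ring_1 \<Rightarrow> 'a) \<Rightarrow> 'a poly \<Rightarrow> 'a poly \<Rightarrow> bool" where
  "right_dvd D Q A \<longleftrightarrow> (\<exists>R. A = dop_mult D R Q)"

definition is_gcrd :: "('a::comm_ring_1 \<Rightarrow> 'a) \<Rightarrow> 'a poly \<Rightarrow> 'a poly \<Rightarrow> 'a poly \<Rightarrow> bool" where
  "is_gcrd D G A B \<longleftrightarrow> lead_coeff G = 1 \<and> right_dvd D G A \<and> right_dvd D G B \<and>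
     (\<forall>Q. right_dvd D Q A \<and> right_dvd D Q B \<longrightarrow> right_dvd D Q G)"

definition t_poly :: "'k::comm_ring_1 poly \<Rightarrow> ('k,'n) mpoly" where
  "t_poly p = (\<Sum>i\<le>degree p. Poly_Mapping.single (Poly_Mapping.single None i) (coeff p i))"

definition kt_field :: "('k::idom,'n::linorder) rfun set" where
  "kt_field = {Fract (t_poly a) (t_poly b) | a b. b \<noteq> 0}"

definition subst_x :: "('n::finite \<Rightarrow> 'k::comm_ring_1) \<Rightarrow> ('k,'n) mpoly \<Rightarrow> 'k poly" where
  "subst_x c g = (\<Sum>m\<in>Poly_Mapping.keys g.
      monom (Poly_Mapping.lookup g m * (\<Prod>i\<in>UNIV. c i ^ Poly_Mapping.lookup m (Some i)))
            (Poly_Mapping.lookup m None))"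

definition loc_ring :: "('k::idom,'n::linorder) mpoly \<Rightarrow> ('k,'n) rfun set" where
  "loc_ring r = {f. \<exists>g h m. h \<noteq> 0 \<and> f = Fract g (t_poly h * r ^ m)}"

definition spec :: "('k::idom,'n::{finite,linorder}) mpoly \<Rightarrow> ('n \<Rightarrow> 'k) \<Rightarrow> ('k,'n) rfun \<Rightarrow> ('k,'n) rfun" where
  "spec r c f = (SOME q. \<exists>g h m. h \<noteq> 0 \<and> f = Fract g (t_poly h * r ^ m) \<and>
      q = Fract (t_poly (subst_x c g)) (t_poly (h * subst_x c r ^ m)))"

definition spec_dop :: "('k::idom,'n::{finite,linorder}) mpoly \<Rightarrow> ('n \<Rightarrow> 'k) \<Rightarrow> ('k,'n) dop \<Rightarrow> ('k,'n) dop" where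
  "spec_dop r c P = map_poly (spec r c) P"

end

theory Submission
  imports Defs "Jordan_Normal_Form.Determinant"
begin


abbreviation psm :: "'a::comm_semiring_0 \<Rightarrow> 'a poly \<Rightarrow> 'a poly" where "psm \<equiv> Polynomial.smult"

lemma psm_sum: "psm a (sum f S) = (\<Sum>x\<in>S. psm a (f x))"
  by (induct S rule: infinite_finite_induct) (simp_all add: smult_add_right)

locale dfield =
  fixes D :: "'a::field \<Rightarrow> 'a"
  assumes D_add: "D (x + y) = D x + D y"
      and D_mult: "D (x * y) = x * D y + D x * y"
begin

lemma D_0[simp]: "D 0 = 0"
proof -
  have "D 0 + D 0 = D 0 + 0" using D_add[of 0 0] by simp
  then show ?thesis by (simp only: add_left_cancel)
qed
lemma D_1[simp]: "D 1 = 0"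
proof -
  have "D 1 + D 1 = D 1 + 0" using D_mult[of 1 1] by simp
  then show ?thesis by (simp only: add_left_cancel)
qed
lemma D_minus: "D (-x) = - D x" using D_add[of x "-x"] by (simp add: eq_neg_iff_add_eq_0 add.commute)

abbreviation dl where "dl \<equiv> d_left D"
abbreviation mul where "mul \<equiv> dop_mult D"

lemma coeff_dl: "coeff (dl B) k = (if k = 0 then 0 else coeff B (k - 1)) + D (coeff B k)"
  by (simp add: d_left_def coeff_pCons coeff_map_poly split: nat.split)

lemma dl_add: "dl (A + B) = dl A + dl B"
  by (rule poly_eqI) (simp add: coeff_dl D_add)
lemma dl_0[simp]: "dl 0 = 0" by (rule poly_eqI) (simp add: coeff_dl)
lemma dl_smult: "dl (psm a B) = psm a (dl B) + psm (D a) B"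
  by (rule poly_eqI) (auto simp: coeff_dl D_mult algebra_simps)
lemma dl_sum: "dl (sum f S) = (\<Sum>x\<in>S. dl (f x))"
  by (induct S rule: infinite_finite_induct) (simp_all add: dl_add)

lemma dlpow_add: "(dl ^^ i) (A + B) = (dl ^^ i) A + (dl ^^ i) B"
  by (induct i) (simp_all add: dl_add)
lemma dlpow_0[simp]: "(dl ^^ i) 0 = 0" by (induct i) simp_all
lemma dlpow_minus: "(dl ^^ i) (- A) = - (dl ^^ i) A"
  using dlpow_add[of i A "-A"] by (simp add: eq_neg_iff_add_eq_0 add.commute)

lemma coeff_dlpow_high: "degree B + i < k \<Longrightarrow> coeff ((dl ^^ i) B) k = 0"
proof (induct i arbitrary: k)
  case 0 then show ?case by (simp add: coeff_eq_0)
next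
  case (Suc i)
  then have "k \<noteq> 0" "degree B + i < k - 1" "degree B + i < k" by auto
  with Suc show ?case by (simp add: coeff_dl)
qed

lemma coeff_dlpow_top: "coeff ((dl ^^ i) B) (degree B + i) = lead_coeff B"
proof (induct i)
  case 0 then show ?case by simp
next
  case (Suc i)
  have "coeff ((dl ^^ i) B) (degree B + Suc i) = 0" by (rule coeff_dlpow_high) simp
  with Suc show ?case by (simp add: coeff_dl)
qed

lemma mul_def2: "degree A < N \<Longrightarrow> mul A B = (\<Sum>i<N. psm (coeff A i) ((dl ^^ i) B))"
  unfolding dop_mult_def
  by (rule sum.mono_neutral_right[symmetric]) (auto simp: coeff_eq_0)

lemma mul_add_left: "mul (A + A') B = mul A B + mul A' B"
proof -
  define N where "N = Suc (degree A + degree A')"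
  have "degree (A + A') < N" using degree_add_le_max[of A A'] unfolding N_def by linarith
  moreover have "degree A < N" "degree A' < N" unfolding N_def by auto
  ultimately show ?thesis
    by (simp add: mul_def2[of _ N] smult_add_left sum.distrib)
qed

lemma mul_0_left[simp]: "mul 0 B = 0" by (simp add: dop_mult_def)
lemma mul_0_right[simp]: "mul A 0 = 0" by (simp add: dop_mult_def)

lemma mul_smult_left: "mul (psm a A) B = psm a (mul A B)"
proof -
  define N where "N = Suc (degree A)"
  have "degree (psm a A) < N" "degree A < N" unfolding N_def by (auto simp: le_imp_less_Suc)
  then show ?thesis
    by (simp add: mul_def2[of _ N] psm_sum)
qed

lemma mul_minus_left: "mul (- A) B = - mul A B"
  using mul_add_left[of A "-A" B] by (simp add: eq_neg_iff_add_eq_0 add.commute)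
lemma mul_diff_left: "mul (A - A') B = mul A B - mul A' B"
  using mul_add_left[of A "-A'" B] mul_minus_left[of A' B] by simp

lemma mul_sum_left: "mul (sum f S) B = (\<Sum>x\<in>S. mul (f x) B)"
  by (induct S rule: infinite_finite_induct) (simp_all add: mul_add_left)

lemma mul_monom_left: "mul (monom c j) B = psm c ((dl ^^ j) B)"
proof -
  have "degree (monom c j) < Suc j" by (simp add: degree_monom_le le_imp_less_Suc)
  then have "mul (monom c j) B = (\<Sum>i<Suc j. psm (coeff (monom c j) i) ((dl ^^ i) B))"
    by (rule mul_def2)
  also have "\<dots> = psm c ((dl ^^ j) B)"
    by (subst sum.remove[of _ j]) (auto simp: coeff_monom intro!: sum.neutral)
  finally show ?thesis .
qed

lemma mul_add_right: "mul A (B + B') = mul A B + mul A B'"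
  by (simp add: dop_mult_def dlpow_add smult_add_right sum.distrib)
lemma mul_minus_right: "mul A (- B) = - mul A B"
  by (simp add: dop_mult_def dlpow_minus sum_negf)
lemma mul_diff_right: "mul A (B - B') = mul A B - mul A B'"
  using mul_add_right[of A B "-B'"] mul_minus_right[of A B'] by simp

lemma dl_mul: "dl (mul A B) = mul (dl A) B"
proof -
  define N where "N = Suc (degree A)"
  have dA: "degree A < N" unfolding N_def by simp
  have d1: "degree (pCons 0 A) < Suc N" using dA by (cases "A = 0") auto
  have d2: "degree (map_poly D A) < N" using dA map_poly_degree_leq[of D A] by linarith
  have "mul (pCons 0 A) B = (\<Sum>i<N. psm (coeff A i) ((dl ^^ Suc i) B))"
    unfolding mul_def2[OF d1] sum.lessThan_Suc_shift by simp
  moreover have "mul (map_poly D A) B = (\<Sum>i<N. psm (D (coeff A i)) ((dl ^^ i) B))"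
    by (simp add: mul_def2[OF d2] coeff_map_poly)
  moreover have "dl (mul A B) = (\<Sum>i<N. psm (coeff A i) ((dl ^^ Suc i) B) + psm (D (coeff A i)) ((dl ^^ i) B))"
    by (simp add: mul_def2[OF dA] dl_sum dl_smult)
  ultimately show ?thesis
    by (simp add: d_left_def[of D A] mul_add_left sum.distrib)
qed

lemma dlpow_mul: "(dl ^^ i) (mul A B) = mul ((dl ^^ i) A) B"
  by (induct i) (simp_all add: dl_mul)

lemma mul_assoc: "mul (mul A B) C = mul A (mul B C)"
proof -
  have "mul (mul A B) C = (\<Sum>i\<le>degree A. psm (coeff A i) (mul ((dl ^^ i) B) C))"
    by (simp add: dop_mult_def[of D A B] mul_sum_left mul_smult_left)
  also have "\<dots> = mul A (mul B C)"
    by (simp add: dop_mult_def[of D A "mul B C"] dlpow_mul)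
  finally show ?thesis .
qed

lemma mul_1_left[simp]: "mul 1 B = B" by (simp add: dop_mult_def)

lemma dlpow_1: "(dl ^^ i) 1 = monom 1 i"
proof (induct i)
  case 0 then show ?case by (simp add: one_pCons monom_0)
next
  case (Suc i)
  have m: "map_poly D (monom 1 i) = 0" by (simp add: map_poly_monom)
  have "(dl ^^ Suc i) 1 = dl (monom 1 i)" using Suc by simp
  also have "\<dots> = pCons 0 (monom 1 i)" unfolding d_left_def m by simp
  finally have "(dl ^^ Suc i) 1 = pCons 0 (monom 1 i)" .
  then show ?case by (simp add: monom_Suc)
qed

lemma mul_1_right[simp]: "mul A 1 = A"
  by (simp add: dop_mult_def dlpow_1 smult_monom poly_as_sum_of_monoms)

lemma mul_const_left: "mul [:c:] B = psm c B"
  using mul_monom_left[of c 0 B] by (simp add: monom_0)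

lemma coeff_mul_high: "degree A + degree B < k \<Longrightarrow> coeff (mul A B) k = 0"
  by (auto simp: dop_mult_def coeff_sum intro!: sum.neutral coeff_dlpow_high)

lemma coeff_mul_top: "coeff (mul A B) (degree A + degree B) = lead_coeff A * lead_coeff B"
proof -
  have "coeff (mul A B) (degree A + degree B) =
        (\<Sum>i\<le>degree A. coeff A i * coeff ((dl ^^ i) B) (degree A + degree B))"
    by (simp add: dop_mult_def coeff_sum)
  also have "\<dots> = lead_coeff A * lead_coeff B"
  proof (subst sum.remove[of _ "degree A"])
    show "coeff A (degree A) * coeff ((dl ^^ degree A) B) (degree A + degree B) +
      (\<Sum>i\<in>{..degree A} - {degree A}. coeff A i * coeff ((dl ^^ i) B) (degree A + degree B)) =
      lead_coeff A * lead_coeff B"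
      using coeff_dlpow_top[of "degree A" B]
      by (auto simp: add.commute coeff_dlpow_high intro!: sum.neutral)
  qed auto
  finally show ?thesis .
qed

lemma degree_mul: "A \<noteq> 0 \<Longrightarrow> B \<noteq> 0 \<Longrightarrow> degree (mul A B) = degree A + degree B"
  by (rule antisym) (auto intro!: degree_le le_degree simp: coeff_mul_high coeff_mul_top)

lemma lead_mul: "A \<noteq> 0 \<Longrightarrow> B \<noteq> 0 \<Longrightarrow> lead_coeff (mul A B) = lead_coeff A * lead_coeff B"
  by (simp add: degree_mul coeff_mul_top)

lemma mul_eq_0: "mul A B = 0 \<longleftrightarrow> A = 0 \<or> B = 0"
proof -
  have "A \<noteq> 0 \<Longrightarrow> B \<noteq> 0 \<Longrightarrow> mul A B \<noteq> 0"
    using lead_mul[of A B] by auto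
  then show ?thesis by auto
qed

end

context dfield begin

lemma rdiv: "B \<noteq> 0 \<Longrightarrow> \<exists>Q R. A = mul Q B + R \<and> (R = 0 \<or> degree R < degree B)"
proof (induct "degree A" arbitrary: A rule: less_induct)
  case less
  show ?case
  proof (cases "A = 0 \<or> degree A < degree B")
    case True
    then show ?thesis by (rule_tac x=0 in exI, rule_tac x=A in exI) auto
  next
    case False
    then have A0: "A \<noteq> 0" and dg: "degree B \<le> degree A" by auto
    define Q0 where "Q0 = monom (lead_coeff A / lead_coeff B) (degree A - degree B)"
    define A' where "A' = A - mul Q0 B"
    have lA: "lead_coeff A \<noteq> 0" "lead_coeff B \<noteq> 0" using A0 less.prems by auto
    then have Q0nz: "Q0 \<noteq> 0" unfolding Q0_def by simp
    have dQ: "degree Q0 = degree A - degree B" "lead_coeff Q0 = lead_coeff A / lead_coeff B"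
      using lA unfolding Q0_def by (auto simp: degree_monom_eq)
    have dM: "degree (mul Q0 B) = degree A" using degree_mul[OF Q0nz less.prems] dQ dg by simp
    have lM: "lead_coeff (mul Q0 B) = lead_coeff A" using lead_mul[OF Q0nz less.prems] dQ lA by simp
    have dA': "A' = 0 \<or> degree A' < degree A"
    proof (rule ccontr)
      assume "\<not> ?thesis"
      then have nz: "A' \<noteq> 0" and ge: "degree A \<le> degree A'" by auto
      have "degree A' \<le> degree A" unfolding A'_def using degree_diff_le_max[of A "mul Q0 B"] dM by simp
      with ge have eq: "degree A' = degree A" by simp
      have "lead_coeff A' = 0" using eq lM unfolding A'_def by (simp add: dM)
      with nz show False by simp
    qed
    show ?thesis
    proof (cases "A' = 0")
      case True
      then show ?thesis unfolding A'_def by (rule_tac x=Q0 in exI, rule_tac x=0 in exI) auto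
    next
      case False
      with dA' have "degree A' < degree A" by simp
      from less.hyps[OF this less.prems] obtain Q R where QR: "A' = mul Q B + R" "R = 0 \<or> degree R < degree B" by blast
      have "A = A' + mul Q0 B" unfolding A'_def by simp
      also have "\<dots> = mul (Q0 + Q) B + R" using QR(1) by (simp add: mul_add_left)
      finally have "A = mul (Q0 + Q) B + R" .
      with QR(2) show ?thesis by blast
    qed
  qed
qed

lemma gcrd1_bezout: assumes "is_gcrd D 1 A B" shows "\<exists>X Y. mul X A + mul Y B = 1"
proof -
  have gc: "\<And>Q. right_dvd D Q A \<Longrightarrow> right_dvd D Q B \<Longrightarrow> right_dvd D Q 1"
    using assms unfolding is_gcrd_def by auto
  define J where "J = {G. G \<noteq> 0 \<and> (\<exists>X Y. G = mul X A + mul Y B)}"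
  show ?thesis
  proof (cases "A = 0 \<and> B = 0")
    case True
    have "right_dvd D 0 1" by (rule gc) (use True in \<open>auto simp: right_dvd_def\<close>)
    then show ?thesis by (simp add: right_dvd_def)
  next
    case False
    have "\<exists>G. G \<in> J"
    proof (cases "A = 0")
      case True
      then have "B \<noteq> 0" using False by simp
      moreover have "B = mul 0 A + mul 1 B" by simp
      ultimately show ?thesis unfolding J_def by blast
    next
      case False
      moreover have "A = mul 1 A + mul 0 B" by simp
      ultimately show ?thesis unfolding J_def by blast
    qed
    then obtain G0 where "G0 \<in> J" by blast
    from ex_has_least_nat[of "\<lambda>G. G \<in> J", OF this, of degree]
    obtain G where GJ: "G \<in> J" and Gmin: "\<And>G'. G' \<in> J \<Longrightarrow> degree G \<le> degree G'" by blast
    from GJ obtain X0 Y0 where G: "G \<noteq> 0" "G = mul X0 A + mul Y0 B" unfolding J_def by blast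
    have dv: "right_dvd D G C" if C: "C = mul X1 A + mul Y1 B" for C X1 Y1
    proof -
      obtain Q R where QR: "C = mul Q G + R" "R = 0 \<or> degree R < degree G" using rdiv[OF G(1)] by blast
      have mQ: "mul Q G = mul (mul Q X0) A + mul (mul Q Y0) B" by (simp add: G(2) mul_add_right mul_assoc)
      have "R = C - mul Q G" using QR(1) by simp
      also have "\<dots> = mul (X1 - mul Q X0) A + mul (Y1 - mul Q Y0) B"
        unfolding mQ C mul_diff_left by simp
      finally have "R = mul (X1 - mul Q X0) A + mul (Y1 - mul Q Y0) B" .
      then have "R = 0 \<or> R \<in> J" unfolding J_def by blast
      then have "R = 0" using QR(2) Gmin[of R] by auto
      then show ?thesis using QR(1) unfolding right_dvd_def by auto
    qed
    have "right_dvd D G A" by (rule dv[of A 1 0]) simp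
    moreover have "right_dvd D G B" by (rule dv[of B 0 1]) simp
    ultimately have "right_dvd D G 1" by (rule gc)
    then obtain S where "1 = mul S G" unfolding right_dvd_def by blast
    then have "1 = mul (mul S X0) A + mul (mul S Y0) B"
      using G(2) by (simp add: mul_add_right mul_assoc)
    then show ?thesis by metis
  qed
qed

end

context dfield begin

lemma bezout_inj_step:
  assumes IH: "\<And>A B X Y U V. degree A + degree B < n \<Longrightarrow> A \<noteq> 0 \<Longrightarrow> B \<noteq> 0 \<Longrightarrow>
        mul X A + mul Y B = 1 \<Longrightarrow> mul U A + mul V B = 0 \<Longrightarrow>
        (U = 0 \<or> degree U < degree B) \<Longrightarrow> (V = 0 \<or> degree V < degree A) \<Longrightarrow> U = 0 \<and> V = 0"
    and n: "degree A + degree B = n" and le: "degree B \<le> degree A"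
    and A0: "A \<noteq> 0" and B0: "B \<noteq> 0"
    and bz: "mul X A + mul Y B = 1" and ker: "mul U A + mul V B = 0"
    and dU: "U = 0 \<or> degree U < degree B" and dV: "V = 0 \<or> degree V < degree A"
  shows "U = 0 \<and> V = 0"
proof -
  obtain Q R where QR: "A = mul Q B + R" "R = 0 \<or> degree R < degree B" using rdiv[OF B0] by blast
  show ?thesis
  proof (cases "R = 0")
    case True
    then have "1 = mul (mul X Q + Y) B" using bz QR(1) by (simp add: mul_add_left mul_assoc)
    then have "degree (mul (mul X Q + Y) B) = 0" by (metis degree_1)
    moreover have "mul X Q + Y \<noteq> 0" using \<open>1 = mul (mul X Q + Y) B\<close> by auto
    ultimately have "degree B = 0" using degree_mul[OF _ B0] by simp
    then have U0: "U = 0" using dU by simp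
    then have "mul V B = 0" using ker by simp
    then show ?thesis using U0 B0 by (simp add: mul_eq_0)
  next
    case False
    then have dR: "degree R < degree B" using QR(2) by simp
    define U' where "U' = mul U Q + V"
    have eU: "mul U A = mul (mul U Q) B + mul U R" using QR(1) by (simp add: mul_add_right mul_assoc)
    have eX: "mul X A = mul (mul X Q) B + mul X R" using QR(1) by (simp add: mul_add_right mul_assoc)
    have ker': "mul U' B + mul U R = 0"
      using ker unfolding U'_def eU mul_add_left by (simp add: add_ac)
    have bz': "mul (mul X Q + Y) B + mul X R = 1"
      using bz unfolding eX mul_add_left by (simp add: add_ac)
    have dU': "U' = 0 \<or> degree U' < degree R"
    proof (cases "U' = 0")
      case False
      have "mul U' B = - mul U R" using ker' by (simp add: eq_neg_iff_add_eq_0)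
      show ?thesis
      proof (cases "U = 0")
        case True
        then have "mul U' B = 0" using \<open>mul U' B = - mul U R\<close> by simp
        then show ?thesis using False B0 by (simp add: mul_eq_0)
      next
        case U0: False
        have "degree (mul U' B) = degree (mul U R)" using \<open>mul U' B = - mul U R\<close> by simp
        then have "degree U' + degree B = degree U + degree R"
          using degree_mul[OF False B0] degree_mul[OF U0 \<open>R \<noteq> 0\<close>] by simp
        then show ?thesis using dU U0 by simp
      qed
    qed simp
    have "U' = 0 \<and> U = 0"
      by (rule IH[OF _ B0 \<open>R \<noteq> 0\<close> bz' ker' dU' dU]) (use n le dR in simp)
    then show ?thesis unfolding U'_def by auto
  qed
qed

lemma bezout_inj:
  "A \<noteq> 0 \<Longrightarrow> B \<noteq> 0 \<Longrightarrow> mul X A + mul Y B = 1 \<Longrightarrow> mul U A + mul V B = 0 \<Longrightarrow>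
   (U = 0 \<or> degree U < degree B) \<Longrightarrow> (V = 0 \<or> degree V < degree A) \<Longrightarrow> U = 0 \<and> V = 0"
proof (induct "degree A + degree B" arbitrary: A B X Y U V rule: less_induct)
  case less
  show ?case
  proof (cases "degree B \<le> degree A")
    case True
    show ?thesis by (rule bezout_inj_step[OF less.hyps refl True less.prems]) auto
  next
    case False
    have bz2: "mul Y B + mul X A = 1" and ker2: "mul V B + mul U A = 0"
      using less.prems(3,4) by (simp_all add: add.commute)
    have "V = 0 \<and> U = 0"
      by (rule bezout_inj_step[OF less.hyps _ _ less.prems(2,1) bz2 ker2 less.prems(6,5)])
         (use False in \<open>auto simp: add.commute\<close>)
    then show ?thesis by simp
  qed
qed

end

definition syl :: "('a::comm_ring_1 \<Rightarrow> 'a) \<Rightarrow> 'a poly \<Rightarrow> 'a poly \<Rightarrow> 'a mat" where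
 "syl D A B = mat (degree A + degree B) (degree A + degree B)
    (\<lambda>(k,j). coeff (if j < degree B then (d_left D ^^ j) A else (d_left D ^^ (j - degree B)) B) k)"

definition cU :: "nat \<Rightarrow> 'a::comm_ring_1 vec \<Rightarrow> 'a poly" where
  "cU l v = (\<Sum>j<l. monom (v $ j) j)"
definition cV :: "nat \<Rightarrow> nat \<Rightarrow> 'a::comm_ring_1 vec \<Rightarrow> 'a poly" where
  "cV l p v = (\<Sum>j<p. monom (v $ (l + j)) j)"

lemma coeff_cU: "j < l \<Longrightarrow> coeff (cU l v) j = v $ j"
  by (simp add: cU_def coeff_sum coeff_monom)
lemma coeff_cV: "j < p \<Longrightarrow> coeff (cV l p v) j = v $ (l + j)"
  by (simp add: cV_def coeff_sum coeff_monom)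
lemma coeff_cU_high: "l \<le> j \<Longrightarrow> coeff (cU l v) j = 0"
  by (simp add: cU_def coeff_sum coeff_monom)
lemma coeff_cV_high: "p \<le> j \<Longrightarrow> coeff (cV l p v) j = 0"
  by (simp add: cV_def coeff_sum coeff_monom)

lemma deg_bound: "(\<And>k. n \<le> k \<Longrightarrow> coeff P k = 0) \<Longrightarrow> P = 0 \<or> degree P < n"
  by (metis leading_coeff_0_iff not_le)

lemma syl_carrier: "syl D A B \<in> carrier_mat (degree A + degree B) (degree A + degree B)"
  by (simp add: syl_def)

context dfield begin

lemma mul_cU: "mul (cU l v) A = (\<Sum>j<l. psm (v $ j) ((dl ^^ j) A))"
  by (simp add: cU_def mul_sum_left mul_monom_left)
lemma mul_cV: "mul (cV l p v) B = (\<Sum>j<p. psm (v $ (l + j)) ((dl ^^ j) B))"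
  by (simp add: cV_def mul_sum_left mul_monom_left)

lemma syl_vec:
  assumes v: "v \<in> carrier_vec (degree A + degree B)" and k: "k < degree A + degree B"
  shows "(syl D A B *\<^sub>v v) $ k =
    coeff (mul (cU (degree B) v) A + mul (cV (degree B) (degree A) v) B) k"
proof -
  let ?l = "degree B" and ?p = "degree A"
  let ?f = "\<lambda>j. coeff (if j < ?l then (dl ^^ j) A else (dl ^^ (j - ?l)) B) k * v $ j"
  have "(syl D A B *\<^sub>v v) $ k = (\<Sum>j = 0..<?p + ?l. ?f j)"
    using v k by (simp add: syl_def scalar_prod_def)
  also have "\<dots> = (\<Sum>j = 0..<?l. ?f j) + (\<Sum>j = ?l..<?p + ?l. ?f j)"
    by (rule sum.atLeastLessThan_concat[symmetric]) auto
  also have "(\<Sum>j = 0..<?l. ?f j) = (\<Sum>j<?l. v $ j * coeff ((dl ^^ j) A) k)"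
    by (auto simp: atLeast0LessThan mult.commute intro!: sum.cong)
  also have "(\<Sum>j = ?l..<?p + ?l. ?f j) = (\<Sum>j = 0..<?p. ?f (j + ?l))"
    using sum.shift_bounds_nat_ivl[of ?f 0 ?l ?p] by simp
  also have "\<dots> = (\<Sum>j<?p. v $ (?l + j) * coeff ((dl ^^ j) B) k)"
    by (auto simp: atLeast0LessThan mult.commute add.commute intro!: sum.cong)
  finally show ?thesis
    by (simp add: mul_cU mul_cV coeff_sum)
qed

lemma syl_high:
  assumes "A \<noteq> 0" "B \<noteq> 0" "degree A + degree B \<le> k"
  shows "coeff (mul (cU (degree B) v) A + mul (cV (degree B) (degree A) v) B) k = 0"
proof -
  have "(\<Sum>j<degree B. v $ j * coeff ((dl ^^ j) A) k) = 0"
    by (rule sum.neutral) (use assms in \<open>auto intro!: coeff_dlpow_high\<close>)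
  moreover have "(\<Sum>j<degree A. v $ (degree B + j) * coeff ((dl ^^ j) B) k) = 0"
    by (rule sum.neutral) (use assms in \<open>auto intro!: coeff_dlpow_high\<close>)
  ultimately show ?thesis by (simp add: mul_cU mul_cV coeff_sum)
qed

theorem gcrd_iff_det:
  assumes A1: "lead_coeff A = 1" and B1: "lead_coeff B = 1"
  shows "is_gcrd D 1 A B \<longleftrightarrow> det (syl D A B) \<noteq> 0"
proof -
  let ?l = "degree B" and ?p = "degree A"
  let ?n = "degree A + degree B"
  let ?W = "\<lambda>v. mul (cU ?l v) A + mul (cV ?l ?p v) B"
  have A0: "A \<noteq> 0" and B0: "B \<noteq> 0" using A1 B1 by auto
  have M: "syl D A B \<in> carrier_mat ?n ?n" by (rule syl_carrier)
  show ?thesis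
  proof
    assume g: "is_gcrd D 1 A B"
    obtain X Y where bz: "mul X A + mul Y B = 1" using gcrd1_bezout[OF g] by blast
    show "det (syl D A B) \<noteq> 0"
    proof
      assume "det (syl D A B) = 0"
      then obtain v where v: "v \<in> carrier_vec ?n" "v \<noteq> 0\<^sub>v ?n" "syl D A B *\<^sub>v v = 0\<^sub>v ?n"
        using det_0_iff_vec_prod_zero[OF M] by blast
      have "?W v = 0"
      proof (rule poly_eqI)
        fix k
        show "coeff (?W v) k = coeff 0 k"
        proof (cases "k < ?n")
          case True
          have "(syl D A B *\<^sub>v v) $ k = 0" using v(3) True by simp
          then show ?thesis using syl_vec[OF v(1) True] by simp
        next
          case False
          then show ?thesis using syl_high[OF A0 B0] by simp
        qed
      qed
      moreover have "cU ?l v = 0 \<or> degree (cU ?l v) < degree B"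
        by (rule deg_bound) (simp add: coeff_cU_high)
      moreover have "cV ?l ?p v = 0 \<or> degree (cV ?l ?p v) < degree A"
        by (rule deg_bound) (simp add: coeff_cV_high)
      ultimately have z: "cU ?l v = 0" "cV ?l ?p v = 0"
        using bezout_inj[OF A0 B0 bz] by blast+
      have "v = 0\<^sub>v ?n"
      proof (rule eq_vecI)
        fix i assume "i < dim_vec (0\<^sub>v ?n :: 'a vec)"
        then have i: "i < ?n" by simp
        show "v $ i = 0\<^sub>v ?n $ i"
        proof (cases "i < ?l")
          case True
          then show ?thesis using coeff_cU[OF True, of v] z i by simp
        next
          case False
          then have "i - ?l < ?p" using i by simp
          from coeff_cV[OF this, of ?l v] z i False show ?thesis by simp
        qed
      qed (use v(1) in simp)
      with v(2) show False by simp
    qed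
  next
    assume d: "det (syl D A B) \<noteq> 0"
    have key: "\<exists>U V. mul U A + mul V B = 1"
    proof (cases "?n = 0")
      case True
      then have "degree A = 0" by simp
      then have "A = 1" using A1 by (metis leading_coeff_0_iff degree_0_id one_pCons)
      then show ?thesis by (rule_tac x=1 in exI, rule_tac x=0 in exI) simp
    next
      case False
      from det_non_zero_imp_unit[OF M d, of undefined]
      obtain Bm where Bm: "Bm \<in> carrier_mat ?n ?n" "syl D A B * Bm = 1\<^sub>m ?n"
        unfolding Units_def ring_mat_def by auto
      define v where "v = Bm *\<^sub>v unit_vec ?n 0"
      have v: "v \<in> carrier_vec ?n" unfolding v_def using Bm(1) by simp
      have sv: "syl D A B *\<^sub>v v = unit_vec ?n 0"
        unfolding v_def using Bm by (simp add: assoc_mult_mat_vec[symmetric, OF M Bm(1)])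
      have "?W v = 1"
      proof (rule poly_eqI)
        fix k
        show "coeff (?W v) k = coeff 1 k"
        proof (cases "k < ?n")
          case True
          have "(syl D A B *\<^sub>v v) $ k = (if k = 0 then 1 else 0)" using sv True False by simp
          then show ?thesis using syl_vec[OF v True] by (simp add: coeff_1)
        next
          case kF: False
          have "k \<noteq> 0" using kF False by linarith
          then show ?thesis using syl_high[OF A0 B0] kF by (simp add: coeff_1)
        qed
      qed
      then show ?thesis by blast
    qed
    then obtain U V where UV: "mul U A + mul V B = 1" by blast
    show "is_gcrd D 1 A B"
      unfolding is_gcrd_def
    proof (intro conjI allI impI)
      show "right_dvd D 1 A" unfolding right_dvd_def by (rule exI[of _ A]) simp
      show "right_dvd D 1 B" unfolding right_dvd_def by (rule exI[of _ B]) simp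
      fix Q assume "right_dvd D Q A \<and> right_dvd D Q B"
      then obtain R1 R2 where "A = mul R1 Q" "B = mul R2 Q" unfolding right_dvd_def by blast
      then have "1 = mul (mul U R1 + mul V R2) Q" using UV by (simp add: mul_add_left mul_assoc)
      then show "right_dvd D Q 1" unfolding right_dvd_def by blast
    qed simp
  qed
qed

end


abbreviation "pml \<equiv> Poly_Mapping.lookup"
abbreviation "pmk \<equiv> Poly_Mapping.keys"
abbreviation "pms \<equiv> Poly_Mapping.single"

lemma mp_expand: "(p :: 'a \<Rightarrow>\<^sub>0 'b::comm_monoid_add) = (\<Sum>m\<in>pmk p. pms m (pml p m))"
proof (rule poly_mapping_eqI)
  fix k
  show "pml p k = pml (\<Sum>m\<in>pmk p. pms m (pml p m)) k"
    by (cases "k \<in> pmk p") (auto simp: lookup_sum lookup_single when_def in_keys_iff)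
qed

lemma mp_induct[case_names zero single add]:
  assumes "P 0" "\<And>m a. P (pms m a)" "\<And>p q. P p \<Longrightarrow> P q \<Longrightarrow> P (p + q)"
  shows "P (p :: 'a \<Rightarrow>\<^sub>0 'b::comm_monoid_add)"
proof -
  have "\<And>S. finite S \<Longrightarrow> P (\<Sum>m\<in>S. pms m (pml p m))"
  proof -
    fix S :: "'a set" assume "finite S"
    then show "P (\<Sum>m\<in>S. pms m (pml p m))"
      by (induct S rule: finite_induct) (auto intro: assms)
  qed
  then show ?thesis by (subst mp_expand) simp
qed

lemma deriv_superset:
  assumes "finite S" "pmk p \<subseteq> S"
  shows "mpoly_deriv_t (p :: ('k::comm_ring_1,'n) mpoly) =
    (\<Sum>m\<in>S. pms (m - pms None 1) (pml p m * of_nat (pml m None)))"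
  unfolding mpoly_deriv_t_def
  by (rule sum.mono_neutral_left) (use assms in \<open>auto simp: in_keys_iff\<close>)

lemma deriv_add: "mpoly_deriv_t (p + q :: ('k::comm_ring_1,'n) mpoly) = mpoly_deriv_t p + mpoly_deriv_t q"
proof -
  let ?S = "pmk p \<union> pmk q \<union> pmk (p + q)"
  have f: "finite ?S" by simp
  have e1: "mpoly_deriv_t p = (\<Sum>m\<in>?S. pms (m - pms None 1) (pml p m * of_nat (pml m None)))"
    by (rule deriv_superset) auto
  have e2: "mpoly_deriv_t q = (\<Sum>m\<in>?S. pms (m - pms None 1) (pml q m * of_nat (pml m None)))"
    by (rule deriv_superset) auto
  have e3: "mpoly_deriv_t (p + q) = (\<Sum>m\<in>?S. pms (m - pms None 1) (pml (p + q) m * of_nat (pml m None)))"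
    by (rule deriv_superset) auto
  show ?thesis
    unfolding e1 e2 e3 by (simp add: lookup_add distrib_right single_add sum.distrib)
qed

lemma deriv_0[simp]: "mpoly_deriv_t (0 :: ('k::comm_ring_1,'n) mpoly) = 0"
  by (simp add: mpoly_deriv_t_def)

lemma deriv_single: "mpoly_deriv_t (pms m a :: ('k::comm_ring_1,'n) mpoly) =
   pms (m - pms None 1) (a * of_nat (pml m None))"
  by (cases "a = 0") (simp_all add: mpoly_deriv_t_def)

lemma deriv_minus: "mpoly_deriv_t (- p :: ('k::comm_ring_1,'n) mpoly) = - mpoly_deriv_t p"
  using deriv_add[of p "-p"] by (simp add: eq_neg_iff_add_eq_0 add.commute)

lemma deriv_diff: "mpoly_deriv_t (p - q :: ('k::comm_ring_1,'n) mpoly) = mpoly_deriv_t p - mpoly_deriv_t q"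
  using deriv_add[of p "-q"] deriv_minus[of q] by simp

lemma mon_shift: "pml n None \<noteq> 0 \<Longrightarrow> m + (n - pms None 1) = (m + n) - pms (None::'n option) (1::nat)"
  by (rule poly_mapping_eqI) (auto simp: lookup_add lookup_minus lookup_single when_def)

lemma single_shift:
  "pms (m + (n - pms None 1)) (c * of_nat (pml n None)) =
   pms ((m + n) - pms None 1) (c * of_nat (pml n None) :: 'k::comm_ring_1)"
  for m n :: "'n option \<Rightarrow>\<^sub>0 nat"
  using mon_shift[of n m] by (cases "pml n None = 0") auto

lemma deriv_mult_single:
  "mpoly_deriv_t (pms m a * pms n b :: ('k::comm_ring_1,'n) mpoly) =
   pms m a * mpoly_deriv_t (pms n b) + mpoly_deriv_t (pms m a) * pms n b"
proof -
  have "pms m a * mpoly_deriv_t (pms n b) = pms ((m + n) - pms None 1) ((a * b) * of_nat (pml n None))"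
    using single_shift[of m n "a*b"] by (simp add: deriv_single mult_single mult.assoc)
  moreover have "mpoly_deriv_t (pms m a) * pms n b = pms ((m + n) - pms None 1) ((a * b) * of_nat (pml m None))"
    using single_shift[of n m "a*b"] by (simp add: deriv_single mult_single add.commute mult_ac)
  ultimately show ?thesis
    by (simp add: deriv_single mult_single lookup_add single_add[symmetric] distrib_left add_ac)
qed

lemma deriv_mult: "mpoly_deriv_t (p * q :: ('k::comm_ring_1,'n) mpoly) =
   p * mpoly_deriv_t q + mpoly_deriv_t p * q"
proof (induct p rule: mp_induct)
  case zero then show ?case by simp
next
  case (single m a)
  show ?case
  proof (induct q rule: mp_induct)
    case zero then show ?case by simp
  next
    case (single n b) then show ?case by (rule deriv_mult_single)
  next
    case (add q1 q2) then show ?case by (simp add: distrib_left distrib_right deriv_add)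
  qed
next
  case (add p1 p2) then show ?case by (simp add: distrib_left distrib_right deriv_add)
qed


abbreviation "TT \<equiv> pms (pms None 1) 1"

lemma t_poly_N: "degree p < N \<Longrightarrow> (t_poly p :: ('k::comm_ring_1,'n) mpoly) = (\<Sum>i<N. pms (pms None i) (coeff p i))"
  unfolding t_poly_def
  by (rule sum.mono_neutral_right[symmetric]) (auto simp: coeff_eq_0)

lemma t_poly_0[simp]: "t_poly 0 = 0" by (simp add: t_poly_def)

lemma t_poly_add: "(t_poly (p + q) :: ('k::comm_ring_1,'n) mpoly) = t_poly p + t_poly q"
proof -
  define N where "N = Suc (degree p + degree q)"
  have "degree (p + q) < N" using degree_add_le_max[of p q] unfolding N_def by linarith
  moreover have "degree p < N" "degree q < N" unfolding N_def by auto
  ultimately show ?thesis by (simp add: t_poly_N[of _ N] single_add sum.distrib)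
qed

lemma t_poly_smult: "(t_poly (Polynomial.smult a p) :: ('k::comm_ring_1,'n) mpoly) = pms 0 a * t_poly p"
proof -
  define N where "N = Suc (degree p)"
  have "degree (Polynomial.smult a p) < N" "degree p < N" unfolding N_def using degree_smult_le[of a p] by auto
  then show ?thesis by (simp add: t_poly_N[of _ N] sum_distrib_left mult_single)
qed

lemma t_poly_pCons: "(t_poly (pCons a q) :: ('k::comm_ring_1,'n) mpoly) = pms 0 a + TT * t_poly q"
proof -
  define M where "M = Suc (degree q)"
  have d1: "degree (pCons a q) < Suc M" unfolding M_def using degree_pCons_le[of a q] by linarith
  have d2: "degree q < M" unfolding M_def by simp
  have h: "TT * pms (pms None i) c = pms (pms None (Suc i)) c" for i and c :: 'k
    by (simp add: mult_single single_add[symmetric])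
  show ?thesis
    unfolding t_poly_N[OF d1] t_poly_N[OF d2] sum.lessThan_Suc_shift sum_distrib_left h
    by simp
qed

lemma t_poly_mult: "(t_poly (p * r) :: ('k::comm_ring_1,'n) mpoly) = t_poly p * t_poly r"
proof (induct p rule: pCons_induct)
  case 0 then show ?case by simp
next
  case (pCons a q)
  have "t_poly (pCons a q * r) = (t_poly (Polynomial.smult a r + pCons 0 (q * r)) :: ('k,'n) mpoly)" by simp
  also have "\<dots> = pms 0 a * t_poly r + TT * (t_poly q * t_poly r)"
    by (simp add: t_poly_add t_poly_smult t_poly_pCons pCons.hyps)
  also have "\<dots> = t_poly (pCons a q) * t_poly r"
    by (simp add: t_poly_pCons algebra_simps)
  finally show ?case .
qed

lemma t_poly_1[simp]: "(t_poly 1 :: ('k::comm_ring_1,'n) mpoly) = 1"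
proof -
  have "(t_poly (pCons (1::'k) 0) :: ('k,'n) mpoly) = pms 0 1 + TT * t_poly 0" by (rule t_poly_pCons)
  then have "(t_poly [:1::'k:] :: ('k,'n) mpoly) = 1" by simp
  then show ?thesis by (simp only: one_pCons)
qed

lemma t_poly_minus: "(t_poly (- p) :: ('k::comm_ring_1,'n) mpoly) = - t_poly p"
proof -
  have "t_poly p + t_poly (- p) = (0 :: ('k,'n) mpoly)" using t_poly_add[of p "-p", symmetric] by simp
  then show ?thesis by (metis add.commute eq_neg_iff_add_eq_0)
qed
lemma t_poly_diff: "(t_poly (p - q) :: ('k::comm_ring_1,'n) mpoly) = t_poly p - t_poly q"
  by (simp only: diff_conv_add_uminus t_poly_add t_poly_minus)
lemma t_poly_power: "(t_poly (p ^ m) :: ('k::comm_ring_1,'n) mpoly) = t_poly p ^ m"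
  by (induct m) (simp_all add: t_poly_mult)

lemma deriv_t_poly: "mpoly_deriv_t (t_poly p :: ('k::idom,'n) mpoly) = t_poly (pderiv p)"
proof (induct p rule: pCons_induct)
  case 0 then show ?case by (simp add: pderiv_0)
next
  case (pCons a q)
  have d0: "mpoly_deriv_t (pms 0 a :: ('k,'n) mpoly) = 0" by (simp add: deriv_single)
  have dT: "mpoly_deriv_t (TT :: ('k,'n) mpoly) = 1" by (simp add: deriv_single)
  have "mpoly_deriv_t (t_poly (pCons a q) :: ('k,'n) mpoly) = mpoly_deriv_t (pms 0 a + TT * t_poly q)"
    by (simp only: t_poly_pCons)
  also have "\<dots> = TT * t_poly (pderiv q) + t_poly q"
    by (simp only: deriv_add deriv_mult d0 dT pCons.hyps) simp
  also have "\<dots> = t_poly (pderiv (pCons a q))"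
    by (simp only: pderiv_pCons t_poly_add t_poly_pCons) simp
  finally show ?case .
qed


definition ev :: "('n::finite \<Rightarrow> 'k::comm_ring_1) \<Rightarrow> ('n option \<Rightarrow>\<^sub>0 nat) \<Rightarrow> 'k" where
  "ev c m = (\<Prod>i\<in>UNIV. c i ^ pml m (Some i))"

lemma subst_superset:
  assumes "finite S" "pmk g \<subseteq> S"
  shows "subst_x c g = (\<Sum>m\<in>S. monom (pml g m * ev c m) (pml m None))"
  unfolding subst_x_def ev_def
  by (rule sum.mono_neutral_left) (use assms in \<open>auto simp: in_keys_iff\<close>)

lemma subst_add: "subst_x c (p + q) = subst_x c p + subst_x c q"
proof -
  let ?S = "pmk p \<union> pmk q \<union> pmk (p + q)"
  have f: "finite ?S" by simp
  have e1: "subst_x c p = (\<Sum>m\<in>?S. monom (pml p m * ev c m) (pml m None))"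
    by (rule subst_superset) auto
  have e2: "subst_x c q = (\<Sum>m\<in>?S. monom (pml q m * ev c m) (pml m None))"
    by (rule subst_superset) auto
  have e3: "subst_x c (p + q) = (\<Sum>m\<in>?S. monom (pml (p + q) m * ev c m) (pml m None))"
    by (rule subst_superset) auto
  show ?thesis
    unfolding e1 e2 e3 by (simp add: lookup_add distrib_right add_monom[symmetric] sum.distrib)
qed

lemma subst_0[simp]: "subst_x c 0 = 0" by (simp add: subst_x_def)

lemma subst_single: "subst_x c (pms m a) = monom (a * ev c m) (pml m None)"
  by (cases "a = 0") (simp_all add: subst_x_def ev_def)

lemma ev_add: "ev c (m + n) = ev c m * ev c n"
  by (simp add: ev_def lookup_add power_add prod.distrib)

lemma subst_mult: "subst_x c (p * q) = subst_x c p * subst_x c q"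
proof (induct p rule: mp_induct)
  case zero then show ?case by simp
next
  case (single m a)
  show ?case
  proof (induct q rule: mp_induct)
    case zero then show ?case by simp
  next
    case (single n b) then show ?case
      by (simp add: mult_single subst_single ev_add mult_monom lookup_add mult_ac)
  next
    case (add q1 q2) then show ?case by (simp add: distrib_left subst_add)
  qed
next
  case (add p1 p2) then show ?case by (simp add: distrib_right subst_add)
qed

lemma subst_1[simp]: "subst_x c 1 = 1"
  using subst_single[of c 0 1] by (simp add: ev_def monom_0)

lemma subst_minus: "subst_x c (- p) = - subst_x c p"
proof -
  have "subst_x c p + subst_x c (- p) = 0" using subst_add[of c p "-p", symmetric] by simp
  then show ?thesis by (metis add.commute eq_neg_iff_add_eq_0)
qed
lemma subst_diff: "subst_x c (p - q) = subst_x c p - subst_x c q"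
  by (simp only: diff_conv_add_uminus subst_add subst_minus)
lemma subst_power: "subst_x c (p ^ m) = subst_x c p ^ m"
  by (induct m) (simp_all add: subst_mult)

lemma subst_t_poly: "subst_x c (t_poly h :: ('k::comm_ring_1,'n::finite) mpoly) = h"
proof (induct h rule: pCons_induct)
  case 0 then show ?case by simp
next
  case (pCons a q)
  have s0: "subst_x c (pms 0 a :: ('k,'n) mpoly) = [:a:]" by (simp add: subst_single ev_def monom_0)
  have sT: "subst_x c (TT :: ('k,'n) mpoly) = monom 1 1" by (simp add: subst_single ev_def lookup_single when_def)
  have "subst_x c (t_poly (pCons a q) :: ('k,'n) mpoly) = [:a:] + monom 1 1 * q"
    by (simp only: t_poly_pCons subst_add subst_mult s0 sT pCons.hyps)
  also have "\<dots> = pCons a q"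
    by (rule poly_eqI) (simp add: coeff_monom_mult coeff_pCons split: nat.split)
  finally show ?case .
qed

lemma ev_shift: "ev c (m - pms None 1) = ev c m"
  by (simp add: ev_def lookup_minus lookup_single when_def)

lemma subst_deriv: "subst_x c (mpoly_deriv_t g :: ('k::idom,'n::finite) mpoly) = pderiv (subst_x c g)"
proof (induct g rule: mp_induct)
  case zero then show ?case by (simp add: pderiv_0)
next
  case (single m a)
  show ?case
    using ev_shift[of c m] by (simp add: deriv_single subst_single pderiv_monom lookup_minus lookup_single mult_ac)
next
  case (add p q) then show ?case by (simp add: deriv_add subst_add pderiv_add)
qed


lemma digits_inj:
  "(\<forall>t<n. D t < (N::nat)) \<Longrightarrow> (\<forall>t<n. D' t < N) \<Longrightarrow>
   (\<Sum>t<n. D t * N ^ t) = (\<Sum>t<n. D' t * N ^ t) \<Longrightarrow> \<forall>t<n. D t = D' t"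
proof (induct n arbitrary: D D')
  case 0 then show ?case by simp
next
  case (Suc n)
  let ?X = "\<Sum>t<n. D (Suc t) * N ^ t" and ?X' = "\<Sum>t<n. D' (Suc t) * N ^ t"
  have e: "(\<Sum>t<Suc n. F t * N ^ t) = F 0 + N * (\<Sum>t<n. F (Suc t) * N ^ t)" for F
    unfolding sum.lessThan_Suc_shift by (simp add: sum_distrib_left mult_ac)
  have d0: "D 0 < N" "D' 0 < N" using Suc.prems by auto
  have eq: "D 0 + N * ?X = D' 0 + N * ?X'" using Suc.prems(3) unfolding e .
  have "(D 0 + N * ?X) mod N = D 0" using d0 by simp
  moreover have "(D' 0 + N * ?X') mod N = D' 0" using d0 by simp
  ultimately have h0: "D 0 = D' 0" using eq by metis
  have "(D 0 + N * ?X) div N = ?X" using d0 by simp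
  moreover have "(D' 0 + N * ?X') div N = ?X'" using d0 by simp
  ultimately have "?X = ?X'" using eq by metis
  moreover have p1: "\<forall>t<n. D (Suc t) < N" using Suc.prems(1) by simp
  moreover have p2: "\<forall>t<n. D' (Suc t) < N" using Suc.prems(2) by simp
  ultimately have IH: "\<forall>t<n. D (Suc t) = D' (Suc t)"
    using Suc.hyps[of "\<lambda>t. D (Suc t)" "\<lambda>t. D' (Suc t)"] by blast
  show ?case
  proof (intro allI impI)
    fix t assume "t < Suc n"
    then show "D t = D' t" using h0 IH by (cases t) auto
  qed
qed

lemma generic_point:
  fixes g :: "('k::field_char_0, 'n::finite) mpoly"
  assumes g0: "g \<noteq> 0"
  shows "\<exists>a. subst_x a g \<noteq> 0"
proof -
  obtain idx :: "'n \<Rightarrow> nat" and nn where idx: "idx ` UNIV = {i. i < nn}" "inj idx"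
    using finite_imp_inj_to_nat_seg[of "UNIV :: 'n set"] by auto
  define N where "N = Suc (\<Sum>m\<in>pmk g. \<Sum>i\<in>UNIV. pml m (Some i))"
  have Nb: "pml m (Some i) < N" if "m \<in> pmk g" for m i
  proof -
    have "pml m (Some i) \<le> (\<Sum>i\<in>UNIV. pml m (Some i))" by (rule member_le_sum) auto
    also have "\<dots> \<le> (\<Sum>m\<in>pmk g. \<Sum>i\<in>UNIV. pml m (Some i))"
      by (rule member_le_sum) (use that in auto)
    finally show ?thesis unfolding N_def by simp
  qed
  define E where "E m = (\<Sum>i\<in>UNIV. pml m (Some i) * N ^ idx i)" for m
  define iv where "iv = inv_into UNIV idx"
  have reidx: "(\<Sum>i\<in>UNIV. d i * N ^ idx i) = (\<Sum>t<nn. d (iv t) * N ^ t)" for d :: "'n \<Rightarrow> nat"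
  proof -
    have "(\<Sum>t<nn. d (iv t) * N ^ t) = (\<Sum>t\<in>idx ` UNIV. d (iv t) * N ^ t)"
      using idx(1) by (simp add: lessThan_def)
    also have "\<dots> = (\<Sum>i\<in>UNIV. d i * N ^ idx i)"
      by (subst sum.reindex) (use idx(2) in \<open>auto simp: iv_def\<close>)
    finally show ?thesis by simp
  qed
  have Einj: "m = m'" if m: "m \<in> pmk g" "m' \<in> pmk g" and eE: "E m = E m'"
    and eN: "pml m None = pml m' None" for m m'
  proof -
    have "\<forall>t<nn. pml m (Some (iv t)) = pml m' (Some (iv t))"
      by (rule digits_inj) (use eE m Nb in \<open>auto simp: E_def reidx\<close>)
    then have "pml m (Some i) = pml m' (Some i)" for i
    proof -
      assume a: "\<forall>t<nn. pml m (Some (iv t)) = pml m' (Some (iv t))"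
      have "idx i < nn" using idx(1) by auto
      with a have "pml m (Some (iv (idx i))) = pml m' (Some (iv (idx i)))" by blast
      then show ?thesis using idx(2) by (simp add: iv_def)
    qed
    then show ?thesis using eN by (intro poly_mapping_eqI) (metis option.exhaust)
  qed
  obtain m0 where m0: "m0 \<in> pmk g" using g0 by (metis all_not_in_conv keys_eq_empty)
  define j0 where "j0 = pml m0 None"
  define S where "S = {m \<in> pmk g. pml m None = j0}"
  have fS: "finite S" unfolding S_def by simp
  define Q where "Q = (\<Sum>m\<in>S. monom (pml g m) (E m))"
  have "coeff Q (E m0) = (\<Sum>m\<in>S. if m = m0 then pml g m else 0)"
    unfolding Q_def coeff_sum
  proof (rule sum.cong)
    fix m assume "m \<in> S"
    then show "coeff (monom (pml g m) (E m)) (E m0) = (if m = m0 then pml g m else 0)"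
      using Einj[of m m0] m0 unfolding S_def j0_def by (auto simp: coeff_monom)
  qed simp
  also have "\<dots> = pml g m0" using fS m0 unfolding S_def j0_def by simp
  finally have "coeff Q (E m0) \<noteq> 0" using m0 by (simp add: in_keys_iff)
  then have Q0: "Q \<noteq> 0" by auto
  obtain s where s: "s \<notin> {x. poly Q x = 0}"
    using ex_new_if_finite[OF infinite_UNIV_char_0 poly_roots_finite[OF Q0]] by blast
  define a where "a i = s ^ (N ^ idx i)" for i
  have eva: "ev a m = s ^ E m" for m
    by (simp add: ev_def a_def E_def power_sum power_mult[symmetric] mult.commute)
  have "coeff (subst_x a g) j0 = (\<Sum>m\<in>pmk g. if pml m None = j0 then pml g m * s ^ E m else 0)"
    by (simp add: subst_x_def coeff_sum coeff_monom eva[unfolded ev_def])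
  also have "\<dots> = (\<Sum>m\<in>S. pml g m * s ^ E m)"
    unfolding S_def by (rule sum.mono_neutral_cong_right) auto
  also have "\<dots> = poly Q s" unfolding Q_def by (simp add: poly_sum poly_monom)
  finally have "coeff (subst_x a g) j0 \<noteq> 0" using s by simp
  then have "subst_x a g \<noteq> 0" by auto
  then show ?thesis by blast
qed


abbreviation "dd \<equiv> mpoly_deriv_t"

lemma ring_id: fixes a b a' b' da db da' db' :: "'a::comm_ring_1"
  assumes "a*b' = a'*b" "a*db' + da*b' = a'*db + da'*b"
  shows "(da*b - a*db)*(b'*b') = (da'*b' - a'*db')*(b*b)"
proof -
  have "(da*b - a*db)*(b'*b') - (da'*b' - a'*db')*(b*b) =
        b*b'*((a*db' + da*b') - (a'*db + da'*b)) - (b'*db + b*db')*(a*b' - a'*b)"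
    by (simp add: algebra_simps)
  then show ?thesis using assms by simp
qed

lemma rd_wd:
  fixes a b a' b' :: "('k::field_char_0,'n::{finite,linorder}) mpoly"
  assumes "b \<noteq> 0" "b' \<noteq> 0" "Fract a b = Fract a' b'"
  shows "Fract (dd a * b - a * dd b) (b * b) = Fract (dd a' * b' - a' * dd b') (b' * b')"
proof -
  have h1: "a * b' = a' * b" using assms(3) eq_fract(1)[OF assms(1,2)] by blast
  then have "dd (a * b') = dd (a' * b)" by simp
  then have h2: "a * dd b' + dd a * b' = a' * dd b + dd a' * b" by (simp only: deriv_mult)
  have "(dd a * b - a * dd b) * (b' * b') = (dd a' * b' - a' * dd b') * (b * b)"
    by (rule ring_id[OF h1 h2])
  moreover have "b * b \<noteq> 0" "b' * b' \<noteq> 0" using assms by auto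
  ultimately show ?thesis using eq_fract(1) by blast
qed

lemma rfun_deriv_Fract:
  fixes a b :: "('k::field_char_0,'n::{finite,linorder}) mpoly"
  assumes "b \<noteq> 0"
  shows "rfun_deriv (Fract a b) = Fract (dd a * b - a * dd b) (b * b)"
proof -
  let ?P = "\<lambda>q. \<exists>a1 b1. b1 \<noteq> 0 \<and> Fract a b = Fract a1 b1 \<and> q = Fract (dd a1 * b1 - a1 * dd b1) (b1 * b1)"
  have "?P (Fract (dd a * b - a * dd b) (b * b))"
    by (rule exI[of _ a], rule exI[of _ b]) (simp only: assms refl simp_thms not_False_eq_True)
  then have "?P (SOME q. ?P q)" by (rule someI[of ?P])
  then obtain a1 b1 where o': "b1 \<noteq> 0 \<and> Fract a b = Fract a1 b1 \<and>
    (SOME q. ?P q) = Fract (dd a1 * b1 - a1 * dd b1) (b1 * b1)" by (elim exE) (erule that)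
  note o = conjunct1[OF o'] conjunct1[OF conjunct2[OF o']] conjunct2[OF conjunct2[OF o']]
  have "rfun_deriv (Fract a b) = (SOME q. ?P q)" unfolding rfun_deriv_def by (rule refl)
  also have "\<dots> = Fract (dd a1 * b1 - a1 * dd b1) (b1 * b1)" by (rule o(3))
  also have "\<dots> = Fract (dd a * b - a * dd b) (b * b)" by (rule rd_wd[OF o(1) assms o(2)[symmetric]])
  finally show ?thesis .
qed


lemma add_id: fixes a b c e da db dc de :: "'a::comm_ring_1" shows
  "(((a * de + da * e) + (c * db + dc * b)) * (b*e) - (a*e + c*b) * (b * de + db * e)) * ((b*b)*(e*e)) =
   ((da * b - a * db) * (e*e) + (dc * e - c * de) * (b*b)) * ((b*e)*(b*e))"
  by (simp add: algebra_simps)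

lemma mult_id: fixes a b c e da db dc de :: "'a::comm_ring_1" shows
  "((a*dc + da*c)*(b*e) - (a*c)*(b*de + db*e)) * ((b*(e*e))*((b*b)*e)) =
   (a*(dc*e - c*de)*((b*b)*e) + (da*b - a*db)*c*(b*(e*e))) * ((b*e)*(b*e))"
  by (simp add: algebra_simps)

lemma rfun_deriv_add:
  fixes x y :: "('k::field_char_0,'n::{finite,linorder}) rfun"
  shows "rfun_deriv (x + y) = rfun_deriv x + rfun_deriv y"
proof (cases x, cases y)
  fix a b c e :: "('k,'n) mpoly"
  assume x: "x = Fract a b" "b \<noteq> 0" and y: "y = Fract c e" "e \<noteq> 0"
  have be: "b * e \<noteq> 0" "b * b \<noteq> 0" "e * e \<noteq> 0" "(b*e)*(b*e) \<noteq> 0" "(b*b)*(e*e) \<noteq> 0"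
    using x y by auto
  have s: "x + y = Fract (a*e + c*b) (b*e)" by (simp only: x y add_fract[OF x(2) y(2)])
  have L: "rfun_deriv (x + y) = Fract (dd (a*e + c*b) * (b*e) - (a*e + c*b) * dd (b*e)) ((b*e)*(b*e))"
    by (simp only: s rfun_deriv_Fract[OF be(1)])
  have R: "rfun_deriv x + rfun_deriv y =
      Fract ((dd a * b - a * dd b) * (e*e) + (dd c * e - c * dd e) * (b*b)) ((b*b)*(e*e))"
    by (simp only: x y rfun_deriv_Fract[OF x(2)] rfun_deriv_Fract[OF y(2)] add_fract[OF be(2,3)])
  show ?thesis unfolding L R eq_fract(1)[OF be(4,5)] deriv_add deriv_mult by (rule add_id)
qed

lemma rfun_deriv_mult:
  fixes x y :: "('k::field_char_0,'n::{finite,linorder}) rfun"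
  shows "rfun_deriv (x * y) = x * rfun_deriv y + rfun_deriv x * y"
proof (cases x, cases y)
  fix a b c e :: "('k,'n) mpoly"
  assume x: "x = Fract a b" "b \<noteq> 0" and y: "y = Fract c e" "e \<noteq> 0"
  have be: "b * e \<noteq> 0" "b * (e * e) \<noteq> 0" "(b * b) * e \<noteq> 0" "(b*e)*(b*e) \<noteq> 0"
    "(b*(e*e))*((b*b)*e) \<noteq> 0"
    using x y by auto
  have s: "x * y = Fract (a*c) (b*e)" by (simp only: x y mult_fract)
  have L: "rfun_deriv (x * y) = Fract (dd (a*c) * (b*e) - (a*c) * dd (b*e)) ((b*e)*(b*e))"
    by (simp only: s rfun_deriv_Fract[OF be(1)])
  have R: "x * rfun_deriv y + rfun_deriv x * y =
      Fract (a*(dd c*e - c*dd e)*((b*b)*e) + (dd a*b - a*dd b)*c*(b*(e*e))) ((b*(e*e))*((b*b)*e))"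
    by (simp only: x y rfun_deriv_Fract[OF x(2)] rfun_deriv_Fract[OF y(2)] mult_fract add_fract[OF be(2,3)])
  show ?thesis unfolding L R eq_fract(1)[OF be(4,5)] deriv_add deriv_mult by (rule mult_id)
qed

interpretation K: dfield "rfun_deriv :: ('k::field_char_0,'n::{finite,linorder}) rfun \<Rightarrow> _"
  by unfold_locales (rule rfun_deriv_add, rule rfun_deriv_mult)


lemma t_poly_inj: "(t_poly h :: ('k::comm_ring_1,'n::finite) mpoly) = 0 \<Longrightarrow> h = 0"
  using subst_t_poly[of "\<lambda>_. 0" h] by (metis subst_0)

definition den :: "('k::comm_ring_1,'n) mpoly \<Rightarrow> ('k,'n) mpoly \<Rightarrow> bool" where
  "den r D \<longleftrightarrow> (\<exists>h m. h \<noteq> 0 \<and> D = t_poly h * r ^ m)"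

lemma den_1: "den r 1" unfolding den_def by (rule exI[of _ 1], rule exI[of _ 0]) simp

lemma den_mult: "den r D1 \<Longrightarrow> den r D2 \<Longrightarrow> den r ((D1 * D2) :: ('k::idom,'n) mpoly)"
  unfolding den_def
proof (elim exE conjE)
  fix h1 m1 h2 m2 assume "h1 \<noteq> 0" "D1 = t_poly h1 * r ^ m1" "h2 \<noteq> 0" "D2 = t_poly h2 * r ^ m2"
  then show "\<exists>h m. h \<noteq> 0 \<and> D1 * D2 = t_poly h * r ^ m"
    by (intro exI[of _ "h1 * h2"] exI[of _ "m1 + m2"]) (simp add: t_poly_mult power_add mult_ac)
qed

lemma loc_ring_iff: "x \<in> loc_ring r \<longleftrightarrow> (\<exists>g D. den r D \<and> x = Fract g D)"
  unfolding loc_ring_def den_def by blast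

locale spc =
  fixes r :: "('k::field_char_0,'n::{finite,linorder}) mpoly" and c :: "'n \<Rightarrow> 'k"
  assumes r_nz: "r \<noteq> 0" and c_ok: "subst_x c r \<noteq> 0"
begin

abbreviation "\<sigma> \<equiv> subst_x c"
abbreviation "sp \<equiv> spec r c"

lemma den_subst: "den r D \<Longrightarrow> \<sigma> D \<noteq> 0"
  unfolding den_def using c_ok by (auto simp: subst_mult subst_power subst_t_poly)

lemma den_nz: "den r D \<Longrightarrow> D \<noteq> 0"
  by (metis den_subst subst_0)

lemma den_tsubst: "den r D \<Longrightarrow> (t_poly (\<sigma> D) :: ('k,'n) mpoly) \<noteq> 0"
  using den_subst t_poly_inj by blast

lemma spec_wd:
  assumes D: "den r D" and h1: "h1 \<noteq> 0" and e: "Fract g D = Fract g1 (t_poly h1 * r ^ m1)"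
  shows "Fract (t_poly (\<sigma> g1)) (t_poly (h1 * \<sigma> r ^ m1)) = (Fract (t_poly (\<sigma> g)) (t_poly (\<sigma> D)) :: ('k,'n) rfun)"
proof -
  define D1 where "D1 = t_poly h1 * r ^ m1"
  have D1: "den r D1" unfolding D1_def den_def using h1 by blast
  have sD1: "\<sigma> D1 = h1 * \<sigma> r ^ m1" unfolding D1_def by (simp add: subst_mult subst_power subst_t_poly)
  have "g * D1 = g1 * D" using e eq_fract(1)[OF den_nz[OF D] den_nz[OF D1]] unfolding D1_def by blast
  then have "t_poly (\<sigma> g1) * t_poly (\<sigma> D) = t_poly (\<sigma> g) * (t_poly (\<sigma> D1) :: ('k,'n) mpoly)"
    by (metis subst_mult t_poly_mult)
  then have "Fract (t_poly (\<sigma> g1)) (t_poly (\<sigma> D1)) = (Fract (t_poly (\<sigma> g)) (t_poly (\<sigma> D)) :: ('k,'n) rfun)"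
    by (simp only: eq_fract(1)[OF den_tsubst[OF D1] den_tsubst[OF D]])
  then show ?thesis by (simp only: sD1)
qed

lemma spec_Fract:
  assumes D: "den r D"
  shows "sp (Fract g D) = Fract (t_poly (\<sigma> g)) (t_poly (\<sigma> D))"
proof -
  obtain h m where hm: "h \<noteq> 0" "D = t_poly h * r ^ m" using D unfolding den_def by blast
  show ?thesis
    unfolding spec_def
    apply (rule someI2[where a = "Fract (t_poly (\<sigma> g)) (t_poly (h * \<sigma> r ^ m))"])
    subgoal using hm by blast
    subgoal using spec_wd[OF D] by blast
    done
qed

lemma lr_add: "x \<in> loc_ring r \<Longrightarrow> y \<in> loc_ring r \<Longrightarrow> x + y \<in> loc_ring r \<and> sp (x + y) = sp x + sp y"
  unfolding loc_ring_iff
proof (elim exE conjE)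
  fix g1 D1 g2 D2 assume D: "den r D1" "x = Fract g1 D1" "den r D2" "y = Fract g2 D2"
  have s: "x + y = Fract (g1 * D2 + g2 * D1) (D1 * D2)" using D den_nz by simp
  have "den r (D1 * D2)" using D den_mult by blast
  moreover have "sp (x + y) = sp x + sp y"
    unfolding s using D
    by (simp add: spec_Fract den_mult den_tsubst subst_add subst_mult t_poly_add t_poly_mult)
  ultimately show "(\<exists>g D. den r D \<and> x + y = Fract g D) \<and> sp (x + y) = sp x + sp y"
    using s by blast
qed

lemma lr_mult: "x \<in> loc_ring r \<Longrightarrow> y \<in> loc_ring r \<Longrightarrow> x * y \<in> loc_ring r \<and> sp (x * y) = sp x * sp y"
  unfolding loc_ring_iff
proof (elim exE conjE)
  fix g1 D1 g2 D2 assume D: "den r D1" "x = Fract g1 D1" "den r D2" "y = Fract g2 D2"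
  have s: "x * y = Fract (g1 * g2) (D1 * D2)" using D by simp
  have "den r (D1 * D2)" using D den_mult by blast
  moreover have "sp (x * y) = sp x * sp y"
    unfolding s using D
    by (simp add: spec_Fract den_mult subst_mult t_poly_mult)
  ultimately show "(\<exists>g D. den r D \<and> x * y = Fract g D) \<and> sp (x * y) = sp x * sp y"
    using s by blast
qed

lemma lr_uminus: "x \<in> loc_ring r \<Longrightarrow> - x \<in> loc_ring r \<and> sp (- x) = - sp x"
  unfolding loc_ring_iff
proof (elim exE conjE)
  fix g D assume D: "den r D" "x = Fract g D"
  have s: "- x = Fract (- g) D" using D by simp
  show "(\<exists>g D. den r D \<and> - x = Fract g D) \<and> sp (- x) = - sp x"
    using s D by (auto simp: spec_Fract subst_minus t_poly_minus)
qed

lemma lr_1: "1 \<in> loc_ring r \<and> sp 1 = 1"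
proof -
  have o: "(1 :: ('k,'n) rfun) = Fract 1 1" by (simp add: One_fract_def)
  show ?thesis unfolding loc_ring_iff o using den_1[of r] by (auto simp: spec_Fract)
qed

lemma lr_0: "0 \<in> loc_ring r \<and> sp 0 = 0"
proof -
  have o: "(0 :: ('k,'n) rfun) = Fract 0 1" by (simp add: Zero_fract_def)
  show ?thesis unfolding loc_ring_iff o using den_1[of r] by (auto simp: spec_Fract)
qed

lemma lr_deriv: "x \<in> loc_ring r \<Longrightarrow> rfun_deriv x \<in> loc_ring r \<and> sp (rfun_deriv x) = rfun_deriv (sp x)"
  unfolding loc_ring_iff
proof (elim exE conjE)
  fix g D assume D: "den r D" "x = Fract g D"
  have s: "rfun_deriv x = Fract (dd g * D - g * dd D) (D * D)" using D den_nz rfun_deriv_Fract by blast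
  have DD: "den r (D * D)" using D den_mult by blast
  have "sp (rfun_deriv x) = rfun_deriv (sp x)"
    unfolding s using D DD
    by (simp add: spec_Fract rfun_deriv_Fract den_tsubst subst_mult subst_diff t_poly_mult t_poly_diff
                  deriv_t_poly subst_deriv)
  then show "(\<exists>g D. den r D \<and> rfun_deriv x = Fract g D) \<and> sp (rfun_deriv x) = rfun_deriv (sp x)"
    using s DD by blast
qed

lemma lr_kt: "x \<in> kt_field \<Longrightarrow> x \<in> loc_ring r \<and> sp x = x"
proof -
  assume "x \<in> kt_field"
  then obtain a b where ab: "b \<noteq> 0" "x = Fract (t_poly a) (t_poly b)" unfolding kt_field_def by blast
  have D: "den r (t_poly b)" unfolding den_def using ab(1) by (intro exI[of _ b] exI[of _ 0]) simp
  show ?thesis unfolding loc_ring_iff using ab D by (auto simp: spec_Fract subst_t_poly)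
qed

lemma lr_sum: "(\<And>i. i \<in> S \<Longrightarrow> f i \<in> loc_ring r) \<Longrightarrow> sum f S \<in> loc_ring r \<and> sp (sum f S) = (\<Sum>i\<in>S. sp (f i))"
proof (induct S rule: infinite_finite_induct)
  case (infinite A) then show ?case using lr_0 by simp
next
  case empty then show ?case using lr_0 by simp
next
  case (insert x F)
  then have "sum f F \<in> loc_ring r \<and> sp (sum f F) = (\<Sum>i\<in>F. sp (f i))" by simp
  with lr_add[of "f x" "sum f F"] insert show ?case by simp
qed

lemma lr_prod: "(\<And>i. i \<in> S \<Longrightarrow> f i \<in> loc_ring r) \<Longrightarrow> prod f S \<in> loc_ring r \<and> sp (prod f S) = (\<Prod>i\<in>S. sp (f i))"
proof (induct S rule: infinite_finite_induct)
  case (infinite A) then show ?case using lr_1 by simp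
next
  case empty then show ?case using lr_1 by simp
next
  case (insert x F)
  then have "prod f F \<in> loc_ring r \<and> sp (prod f F) = (\<Prod>i\<in>F. sp (f i))" by simp
  with lr_mult[of "f x" "prod f F"] insert show ?case by simp
qed

end


context spc begin

lemma coeff_map_sp: "coeff (map_poly sp Y) k = sp (coeff Y k)"
  using lr_0 by (simp add: coeff_map_poly)

lemma spec_map_dl:
  assumes X: "\<forall>i. coeff X i \<in> loc_ring r"
  shows "(\<forall>i. coeff (K.dl X) i \<in> loc_ring r) \<and> map_poly sp (K.dl X) = K.dl (map_poly sp X)"
proof -
  have c: "coeff (K.dl X) k \<in> loc_ring r \<and> sp (coeff (K.dl X) k) = coeff (K.dl (map_poly sp X)) k" for k
  proof -
    have a: "(if k = 0 then 0 else coeff X (k - 1)) \<in> loc_ring r \<and>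
             sp (if k = 0 then 0 else coeff X (k - 1)) = (if k = 0 then 0 else sp (coeff X (k - 1)))"
      using X lr_0 by auto
    have b: "rfun_deriv (coeff X k) \<in> loc_ring r \<and> sp (rfun_deriv (coeff X k)) = rfun_deriv (sp (coeff X k))"
      using lr_deriv X by blast
    show ?thesis
      unfolding K.coeff_dl coeff_map_sp using lr_add[of _ "rfun_deriv (coeff X k)"] a b by auto
  qed
  show ?thesis
  proof
    show "\<forall>i. coeff (K.dl X) i \<in> loc_ring r" using c by blast
    show "map_poly sp (K.dl X) = K.dl (map_poly sp X)"
      by (rule poly_eqI) (simp add: coeff_map_sp c)
  qed
qed

lemma spec_map_dlpow:
  assumes X: "\<forall>i. coeff X i \<in> loc_ring r"
  shows "(\<forall>i. coeff ((K.dl ^^ j) X) i \<in> loc_ring r) \<and> map_poly sp ((K.dl ^^ j) X) = (K.dl ^^ j) (map_poly sp X)"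
proof (induct j)
  case 0 then show ?case using X by simp
next
  case (Suc j)
  then show ?case using spec_map_dl[of "(K.dl ^^ j) X"] by simp
qed

lemma lr_signof: "(signof p :: ('k,'n) rfun) \<in> loc_ring r \<and> sp (signof p) = signof p"
  using lr_1 lr_uminus[of 1] by (auto simp: sign_def)

lemma det_spec:
  assumes M: "M \<in> carrier_mat n n" and E: "\<And>i j. i < n \<Longrightarrow> j < n \<Longrightarrow> M $$ (i, j) \<in> loc_ring r"
  shows "det M \<in> loc_ring r \<and> det (map_mat sp M) = sp (det M)"
proof -
  let ?t = "\<lambda>p. signof p * (\<Prod>i = 0..<n. M $$ (i, p i))"
  have t: "?t p \<in> loc_ring r \<and> sp (?t p) = signof p * (\<Prod>i = 0..<n. sp (M $$ (i, p i)))"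
    if p: "p permutes {0..<n}" for p
  proof -
    have pi: "i < n \<Longrightarrow> p i < n" for i using p by (metis atLeastLessThan_iff permutes_in_image zero_le)
    have pr: "(\<Prod>i = 0..<n. M $$ (i, p i)) \<in> loc_ring r \<and>
        sp (\<Prod>i = 0..<n. M $$ (i, p i)) = (\<Prod>i = 0..<n. sp (M $$ (i, p i)))"
      by (rule lr_prod) (use E pi in auto)
    show ?thesis using lr_mult[OF conjunct1[OF lr_signof] conjunct1[OF pr]] pr lr_signof by simp
  qed
  have s: "sum ?t {p. p permutes {0..<n}} \<in> loc_ring r \<and>
      sp (sum ?t {p. p permutes {0..<n}}) = (\<Sum>p\<in>{p. p permutes {0..<n}}. sp (?t p))"
    by (rule lr_sum) (use t in auto)
  have mM: "map_mat sp M \<in> carrier_mat n n" using M by simp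
  have "det (map_mat sp M) = (\<Sum>p\<in>{p. p permutes {0..<n}}. signof p * (\<Prod>i = 0..<n. sp (M $$ (i, p i))))"
    unfolding det_def'[OF mM]
  proof (rule sum.cong)
    fix p assume "p \<in> {p. p permutes {0..<n}}"
    then have p: "p permutes {0..<n}" by simp
    have "i < n \<Longrightarrow> p i < n" for i using p by (metis atLeastLessThan_iff permutes_in_image zero_le)
    then show "signof p * (\<Prod>i = 0..<n. map_mat sp M $$ (i, p i)) = signof p * (\<Prod>i = 0..<n. sp (M $$ (i, p i)))"
      using M by (auto intro!: prod.cong)
  qed simp
  also have "\<dots> = sp (det M)" unfolding det_def'[OF M] using s t by simp
  finally show ?thesis using s unfolding det_def'[OF M] by simp
qed

lemma key:
  fixes P L :: "('k,'n) dop"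
  assumes P_monic: "lead_coeff P = 1"
    and P_coeffs: "\<forall>i. coeff P i \<in> loc_ring r"
    and L_coeffs: "\<forall>i. coeff L i \<in> kt_field"
  shows "lead_coeff (spec_dop r c P) = 1 \<and>
    det (syl rfun_deriv (spec_dop r c P) L) = sp (det (syl rfun_deriv P L)) \<and>
    det (syl rfun_deriv P L) \<in> loc_ring r"
proof -
  let ?Pc = "spec_dop r c P"
  have Pc: "?Pc = map_poly sp P" unfolding spec_dop_def ..
  have cPc: "coeff ?Pc k = sp (coeff P k)" for k unfolding Pc coeff_map_sp ..
  have dP: "degree ?Pc = degree P"
  proof (rule antisym)
    show "degree ?Pc \<le> degree P" unfolding Pc by (rule map_poly_degree_leq)
    show "degree P \<le> degree ?Pc" using P_monic lr_1 by (intro le_degree) (simp add: cPc)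
  qed
  have lPc: "lead_coeff ?Pc = 1" using dP P_monic lr_1 by (simp add: cPc)
  have Lc: "\<forall>i. coeff L i \<in> loc_ring r" using L_coeffs lr_kt by blast
  have L: "map_poly sp L = L" by (rule poly_eqI) (use L_coeffs lr_kt in \<open>simp add: coeff_map_sp\<close>)
  define M where "M = syl rfun_deriv P L"
  let ?n = "degree P + degree L"
  have M: "M \<in> carrier_mat ?n ?n" unfolding M_def by (rule syl_carrier)
  have E: "M $$ (i, j) \<in> loc_ring r" if "i < ?n" "j < ?n" for i j
    using that spec_map_dlpow[OF P_coeffs] spec_map_dlpow[OF Lc] unfolding M_def syl_def by auto
  have "syl rfun_deriv ?Pc L = map_mat sp M"
  proof (rule eq_matI)
    fix i j assume ij: "i < dim_row (map_mat sp M)" "j < dim_col (map_mat sp M)"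
    then have ij': "i < ?n" "j < ?n" using M by auto
    have "sp (coeff ((K.dl ^^ j) P) i) = coeff ((K.dl ^^ j) ?Pc) i"
      using spec_map_dlpow[OF P_coeffs, of j] unfolding Pc by (metis coeff_map_sp)
    moreover have "sp (coeff ((K.dl ^^ (j - degree L)) L) i) = coeff ((K.dl ^^ (j - degree L)) L) i"
      using spec_map_dlpow[OF Lc, of "j - degree L"] unfolding L by (metis coeff_map_sp)
    ultimately show "syl rfun_deriv ?Pc L $$ (i, j) = map_mat sp M $$ (i, j)"
      using ij' M unfolding M_def syl_def by (simp add: dP)
  qed (use M dP in \<open>auto simp: syl_def\<close>)
  then show ?thesis using det_spec[OF M E] lPc unfolding M_def by simp
qed

end


lemma Fract_nz: "y \<noteq> 0 \<Longrightarrow> x \<noteq> 0 \<Longrightarrow> Fract x (y :: 'a::idom) \<noteq> 0"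
  by (simp add: Zero_fract_def eq_fract(1))

theorem mainTheorem11:
  fixes P L :: "('k::{alg_closed_field,field_char_0}, 'n::{finite,linorder}) dop"
    and r :: "('k,'n) mpoly"
    and c :: "'n \<Rightarrow> 'k"
  assumes P_monic: "lead_coeff P = 1"
    and L_monic: "lead_coeff L = 1"
    and r_nz: "r \<noteq> 0"
    and P_coeffs: "\<forall>i. coeff P i \<in> loc_ring r"
    and L_coeffs: "\<forall>i. coeff L i \<in> kt_field"
    and c_ok: "subst_x c r \<noteq> 0"
  shows "(is_gcrd rfun_deriv 1 (spec_dop r c P) L \<longrightarrow> is_gcrd rfun_deriv 1 P L) \<and>
         (is_gcrd rfun_deriv 1 P L \<longrightarrow>
            (\<exists>a. subst_x a r \<noteq> 0 \<and> is_gcrd rfun_deriv 1 (spec_dop r a P) L))"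
proof -
  interpret S: spc r c by unfold_locales (fact r_nz, fact c_ok)
  define M where "M = syl rfun_deriv P L"
  have k: "lead_coeff (spec_dop r c P) = 1" "det (syl rfun_deriv (spec_dop r c P) L) = S.sp (det M)"
    "det M \<in> loc_ring r"
    using S.key[OF P_monic P_coeffs L_coeffs] unfolding M_def by auto
  have gP: "is_gcrd rfun_deriv 1 P L \<longleftrightarrow> det M \<noteq> 0"
    unfolding M_def by (rule K.gcrd_iff_det[OF P_monic L_monic])
  show ?thesis
  proof (intro conjI impI)
    assume "is_gcrd rfun_deriv 1 (spec_dop r c P) L"
    then have "det (syl rfun_deriv (spec_dop r c P) L) \<noteq> 0"
      using K.gcrd_iff_det[OF k(1) L_monic] by blast
    then have "det M \<noteq> 0" using k(2) S.lr_0 by auto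
    then show "is_gcrd rfun_deriv 1 P L" using gP by blast
  next
    assume "is_gcrd rfun_deriv 1 P L"
    then have d0: "det M \<noteq> 0" using gP by blast
    obtain g D where gD: "den r D" "det M = Fract g D" using k(3) unfolding loc_ring_iff by blast
    have g0: "g \<noteq> 0" using d0 gD by (auto simp: Zero_fract_def eq_fract)
    have "g * r \<noteq> 0" using g0 r_nz by simp
    then obtain a where "subst_x a (g * r) \<noteq> 0" using generic_point by blast
    then have a: "subst_x a g \<noteq> 0" "subst_x a r \<noteq> 0" by (auto simp: subst_mult)
    interpret A: spc r a by unfold_locales (fact r_nz, fact a(2))
    have ka: "lead_coeff (spec_dop r a P) = 1" "det (syl rfun_deriv (spec_dop r a P) L) = A.sp (det M)"
      using A.key[OF P_monic P_coeffs L_coeffs] unfolding M_def by auto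
    have "A.sp (det M) = Fract (t_poly (subst_x a g)) (t_poly (subst_x a D))"
      unfolding gD(2) by (rule A.spec_Fract[OF gD(1)])
    also have "\<dots> \<noteq> 0"
      by (rule Fract_nz[OF A.den_tsubst[OF gD(1)]]) (use a(1) t_poly_inj in blast)
    finally have "det (syl rfun_deriv (spec_dop r a P) L) \<noteq> 0" using ka(2) by simp
    then have "is_gcrd rfun_deriv 1 (spec_dop r a P) L" using K.gcrd_iff_det[OF ka(1) L_monic] by blast
    then show "\<exists>a. subst_x a r \<noteq> 0 \<and> is_gcrd rfun_deriv 1 (spec_dop r a P) L" using a(2) by blast
  qed
qed


end
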